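(* Let $X$ be a Banach space, $(A_n)_{n\in\mathbb{Z}}$ a sequence of invertible bounded linear operators on $X$ with $\sup_n\lVert A_n\rVert<\infty$ admitting an exponential dichotomy, and let $1\le p<\infty$. For each sequence $(y_n)_{n\in\mathbb{Z}}\subset X$ with $\sum_{n\in\mathbb{Z}}\lVert y_{n+1}-A_ny_n\rVert^p<\infty$, there exists a unique sequence $(x_n)_{n\in\mathbb{Z}}\subset X$ with $x_{n+1}=A_nx_n$ for all $n\in\mathbb{Z}$ and $\sum_{n\in\mathbb{Z}}\lVert x_n-y_n\rVert^p<\infty$.
   Context: Exponential dichotomy: with $\mathcal A(m,n)=A_{m-1}\cdots A_n$ ($m>n$), $\mathrm{Id}$ ($m=n$), $A_m^{-1}\cdots A_{n-1}^{-1}$ ($m<n$), there exist projections $P_m$ on $X$ with $P_{m+1}A_m=A_mP_m$ for all $m$ and constants $C,\lambda>0$ with $\lVert\mathcal A(m,n)P_n\rVert\le Ce^{-\lambda(m-n)}$ for $m\ge n$ and $\lVert\mathcal A(m,n)(\mathrm{Id}-P_n)\rVert\le Ce^{-\lambda(n-m)}$ for $m\le n$. *)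

theory Defs
  imports "HOL-Analysis.Analysis"
begin

definition invertible_op :: "('a::real_normed_vector \<Rightarrow>\<^sub>L 'a) \<Rightarrow> bool" where
  "invertible_op B \<longleftrightarrow> (\<exists>C. C o\<^sub>L B = id_blinfun \<and> B o\<^sub>L C = id_blinfun)"

definition op_inv :: "('a::real_normed_vector \<Rightarrow>\<^sub>L 'a) \<Rightarrow> ('a \<Rightarrow>\<^sub>L 'a)" where
  "op_inv B = (SOME C. C o\<^sub>L B = id_blinfun \<and> B o\<^sub>L C = id_blinfun)"

fun fwd :: "(int \<Rightarrow> 'a::real_normed_vector \<Rightarrow>\<^sub>L 'a) \<Rightarrow> int \<Rightarrow> nat \<Rightarrow> 'a \<Rightarrow>\<^sub>L 'a" where
  "fwd A n 0 = id_blinfun"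
| "fwd A n (Suc k) = A (n + int k) o\<^sub>L fwd A n k"

fun bwd :: "(int \<Rightarrow> 'a::real_normed_vector \<Rightarrow>\<^sub>L 'a) \<Rightarrow> int \<Rightarrow> nat \<Rightarrow> 'a \<Rightarrow>\<^sub>L 'a" where
  "bwd A n 0 = id_blinfun"
| "bwd A n (Suc k) = op_inv (A (n - int k - 1)) o\<^sub>L bwd A n k"

definition cocycle :: "(int \<Rightarrow> 'a::real_normed_vector \<Rightarrow>\<^sub>L 'a) \<Rightarrow> int \<Rightarrow> int \<Rightarrow> 'a \<Rightarrow>\<^sub>L 'a" where
  "cocycle A m n = (if n \<le> m then fwd A n (nat (m - n)) else bwd A n (nat (n - m)))"

definition exp_dichotomy :: "(int \<Rightarrow> 'a::real_normed_vector \<Rightarrow>\<^sub>L 'a) \<Rightarrow> bool" where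
  "exp_dichotomy A \<longleftrightarrow>
    (\<exists>P :: int \<Rightarrow> 'a \<Rightarrow>\<^sub>L 'a. \<exists>C lam :: real. C > 0 \<and> lam > 0 \<and>
      (\<forall>m. P m o\<^sub>L P m = P m) \<and>
      (\<forall>m. P (m + 1) o\<^sub>L A m = A m o\<^sub>L P m) \<and>
      (\<forall>m n. n \<le> m \<longrightarrow> norm (cocycle A m n o\<^sub>L P n) \<le> C * exp (- lam * real_of_int (m - n))) \<and>
      (\<forall>m n. m \<le> n \<longrightarrow> norm (cocycle A m n o\<^sub>L (id_blinfun - P n)) \<le> C * exp (- lam * real_of_int (n - m))))"

end

theory Submission
  imports Defs
begin

lemma op_inv_props:
  assumes "invertible_op B"
  shows "op_inv B o\<^sub>L B = id_blinfun" "B o\<^sub>L op_inv B = id_blinfun"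
proof -
  have "\<exists>C. C o\<^sub>L B = id_blinfun \<and> B o\<^sub>L C = id_blinfun" using assms unfolding invertible_op_def .
  from someI_ex[OF this] show "op_inv B o\<^sub>L B = id_blinfun" "B o\<^sub>L op_inv B = id_blinfun"
    unfolding op_inv_def by auto
qed

lemma op_inv_apply:
  assumes "invertible_op B"
  shows "op_inv B (B v) = v" "B (op_inv B v) = v"
  using op_inv_props[OF assms] by (metis blinfun_apply_blinfun_compose blinfun_apply_id_blinfun)+

lemma cocycle_step:
  assumes inv: "\<forall>n. invertible_op (A n)"
  shows "A m (cocycle A m n v) = cocycle A (m + 1) n v"
proof (cases "n \<le> m")
  case True
  have e: "nat (m + 1 - n) = Suc (nat (m - n))" using True by simp
  have e2: "n + int (nat (m - n)) = m" using True by simp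
  show ?thesis using True unfolding cocycle_def by (simp add: e e2)
next
  case False
  show ?thesis
  proof (cases "n = m + 1")
    case True
    have "cocycle A m n = op_inv (A m) o\<^sub>L id_blinfun"
      unfolding cocycle_def using True by (simp add: nat_add_distrib)
    moreover have "cocycle A (m+1) n = id_blinfun" unfolding cocycle_def using True by simp
    ultimately show ?thesis using op_inv_apply[OF inv[rule_format]] by simp
  next
    case F2: False
    have e: "nat (n - m) = Suc (nat (n - (m + 1)))" using False F2 by simp
    have e2: "n - int (nat (n - (m + 1))) - 1 = m" using False F2 by simp
    have "cocycle A m n = op_inv (A m) o\<^sub>L cocycle A (m+1) n"
      unfolding cocycle_def using False F2 by (simp add: e e2)
    then show ?thesis using op_inv_apply[OF inv[rule_format]] by simp
  qed
qed

lemma homog_cocycle: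
  assumes inv: "\<forall>n. invertible_op (A n)"
    and w: "\<forall>n. w (n + 1) = A n (w n)"
  shows "w m = cocycle A m n (w n)"
proof (cases "n \<le> m")
  case True
  then show ?thesis
  proof (induction m rule: int_ge_induct)
    case base
    then show ?case by (simp add: cocycle_def)
  next
    case (step i)
    then show ?case using w cocycle_step[OF inv] by metis
  qed
next
  case False
  then have "m \<le> n" by simp
  then show ?thesis
  proof (induction m rule: int_le_induct)
    case base
    then show ?case by (simp add: cocycle_def)
  next
    case (step i)
    have "A (i - 1) (w (i - 1)) = A (i - 1) (cocycle A (i - 1) n (w n))"
      using w[rule_format, of "i - 1"] cocycle_step[OF inv, of "i - 1" n "w n"] step by simp
    then show ?case using op_inv_apply(1)[OF inv[rule_format, of "i - 1"]] by metis
  qed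
qed


lemma term_le_infsum:
  fixes f :: "'i \<Rightarrow> real"
  assumes "f summable_on UNIV" "\<And>n. f n \<ge> 0"
  shows "f n \<le> infsum f UNIV"
  using finite_sum_le_infsum[OF assms(1), of "{n}"] assms(2) by simp

lemma lp_bound:
  fixes g :: "'i \<Rightarrow> real"
  assumes "(\<lambda>n. g n powr p) summable_on UNIV" "\<And>n. g n \<ge> 0" "p > 0"
  shows "\<exists>M. \<forall>n. g n \<le> M"
proof -
  let ?S = "infsum (\<lambda>n. g n powr p) UNIV"
  have "g n \<le> ?S powr (1/p)" for n
  proof -
    have "g n powr p \<le> ?S" using term_le_infsum[OF assms(1)] by simp
    then have "(g n powr p) powr (1/p) \<le> ?S powr (1/p)"
      by (intro powr_mono2) (use assms in auto)
    then show ?thesis using assms by (simp add: powr_powr)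
  qed
  then show ?thesis by blast
qed

lemma exp_abs_summable:
  fixes lam :: real assumes "lam > 0"
  shows "(\<lambda>j::int. exp (- lam * \<bar>real_of_int j\<bar>)) summable_on UNIV"
proof -
  let ?e = "\<lambda>j::int. exp (- lam * \<bar>real_of_int j\<bar>)"
  have g: "summable (\<lambda>n::nat. exp (- lam) ^ n)"
    using assms by (intro summable_geometric) simp
  have s1: "(\<lambda>n::nat. exp (- lam * real n)) summable_on UNIV"
    using g by (subst summable_on_UNIV_nonneg_real_iff) (auto simp: exp_of_nat_mult[symmetric] mult.commute)
  have s2: "(\<lambda>n::nat. exp (- lam) * exp (- lam * real n)) summable_on UNIV"
    using s1 by (rule summable_on_cmult_right)
  have a: "?e summable_on (int ` UNIV)"
    by (subst summable_on_reindex) (use s1 in \<open>auto simp: o_def\<close>)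
  have b: "?e summable_on ((\<lambda>n. - int n - 1) ` UNIV)"
  proof (subst summable_on_reindex)
    show "inj_on (\<lambda>n. - int n - 1) UNIV" by (auto simp: inj_on_def)
    have "(?e \<circ> (\<lambda>n. - int n - 1)) = (\<lambda>n::nat. exp (- lam) * exp (- lam * real n))"
      by (auto simp: o_def exp_add[symmetric] algebra_simps)
    then show "(?e \<circ> (\<lambda>n. - int n - 1)) summable_on UNIV" using s2 by simp
  qed
  have U: "UNIV = int ` UNIV \<union> (\<lambda>n. - int n - 1) ` UNIV"
  proof -
    have "j \<in> int ` UNIV \<union> (\<lambda>n. - int n - 1) ` UNIV" for j :: int
    proof (cases "j \<ge> 0")
      case True then show ?thesis by (metis UnI1 nonneg_int_cases rangeI)
    next
      case False
      then have "j = - int (nat (- j - 1)) - 1" by simp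
      then show ?thesis by blast
    qed
    then show ?thesis by blast
  qed
  show ?thesis by (subst U, rule summable_on_Un_disjoint[OF a b]) auto
qed

lemma finite_jensen:
  fixes w a :: "'i \<Rightarrow> real"
  assumes "finite S" "\<And>i. w i > 0" "\<And>i. a i \<ge> 0" "p \<ge> 1"
  shows "(\<Sum>i\<in>S. w i * a i) powr p \<le> (\<Sum>i\<in>S. w i) powr (p - 1) * (\<Sum>i\<in>S. w i * a i powr p)"
proof -
  define S' where "S' = {i\<in>S. a i > 0}"
  have fin: "finite S'" using assms(1) by (simp add: S'_def)
  have z: "i \<in> S - S' \<Longrightarrow> a i = 0" for i using assms(3)[of i] by (auto simp: S'_def)
  have sub: "S' \<subseteq> S" by (auto simp: S'_def)
  have eq1: "(\<Sum>i\<in>S. w i * a i) = (\<Sum>i\<in>S'. w i * a i)"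
    by (rule sum.mono_neutral_right[OF assms(1) sub]) (use z in auto)
  have eq2: "(\<Sum>i\<in>S. w i * a i powr p) = (\<Sum>i\<in>S'. w i * a i powr p)"
    by (rule sum.mono_neutral_right[OF assms(1) sub]) (use z in auto)
  have WW: "(\<Sum>i\<in>S'. w i) \<le> (\<Sum>i\<in>S. w i)"
    by (rule sum_mono2[OF assms(1) sub]) (use assms(2) in \<open>auto intro: less_imp_le\<close>)
  have rhs_nn: "0 \<le> (\<Sum>i\<in>S. w i) powr (p - 1) * (\<Sum>i\<in>S. w i * a i powr p)"
    using assms(2,3) by (intro mult_nonneg_nonneg sum_nonneg) (auto intro!: mult_nonneg_nonneg intro: less_imp_le)
  show ?thesis
  proof (cases "S' = {}")
    case True
    then show ?thesis using eq1 rhs_nn by simp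
  next
    case False
    define W where "W = (\<Sum>i\<in>S'. w i)"
    have Wp: "W > 0" unfolding W_def using False fin assms(2) by (intro sum_pos) auto
    have c: "(\<lambda>x. x powr p) ((\<Sum>i\<in>S'. (w i / W) *\<^sub>R a i)) \<le> (\<Sum>i\<in>S'. (w i / W) * (\<lambda>x. x powr p) (a i))"
      by (rule convex_on_sum[OF fin False powr_convex[OF assms(4)]])
        (use Wp assms(2) in \<open>auto simp: S'_def W_def sum_divide_distrib[symmetric] intro: less_imp_le\<close>)
    have l: "(\<Sum>i\<in>S'. (w i / W) *\<^sub>R a i) = (\<Sum>i\<in>S'. w i * a i) / W"
      by (simp add: sum_divide_distrib)
    have r: "(\<Sum>i\<in>S'. (w i / W) * (a i powr p)) = (\<Sum>i\<in>S'. w i * a i powr p) / W"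
      by (simp add: sum_divide_distrib)
    have nn: "0 \<le> (\<Sum>i\<in>S'. w i * a i)" using assms(2,3) by (intro sum_nonneg) (auto intro!: mult_nonneg_nonneg intro: less_imp_le)
    have "((\<Sum>i\<in>S'. w i * a i) / W) powr p \<le> (\<Sum>i\<in>S'. w i * a i powr p) / W"
      using c l r by simp
    then have "(\<Sum>i\<in>S'. w i * a i) powr p / W powr p \<le> (\<Sum>i\<in>S'. w i * a i powr p) / W"
      using nn Wp by (simp add: powr_divide)
    then have "(\<Sum>i\<in>S'. w i * a i) powr p \<le> W powr p * ((\<Sum>i\<in>S'. w i * a i powr p) / W)"
      using Wp by (simp add: divide_le_eq mult.commute)
    also have "W powr p * ((\<Sum>i\<in>S'. w i * a i powr p) / W) = W powr (p - 1) * (\<Sum>i\<in>S'. w i * a i powr p)"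
      using Wp by (simp add: powr_diff)
    also have "\<dots> \<le> (\<Sum>i\<in>S. w i) powr (p - 1) * (\<Sum>i\<in>S'. w i * a i powr p)"
      apply (rule mult_right_mono)
       apply (rule powr_mono2) using assms(4) Wp WW apply (auto simp: W_def)[3]
      using assms(2,3) by (intro sum_nonneg) (auto intro!: mult_nonneg_nonneg intro: less_imp_le)
    finally show ?thesis using eq1 eq2 by simp
  qed
qed

lemma inf_jensen:
  fixes w a :: "'i \<Rightarrow> real"
  assumes "w summable_on UNIV" "\<And>i. w i > 0" "\<And>i. a i \<ge> 0" "p \<ge> 1"
    and s1: "(\<lambda>i. w i * a i) summable_on UNIV" and s2: "(\<lambda>i. w i * a i powr p) summable_on UNIV"
  shows "(infsum (\<lambda>i. w i * a i) UNIV) powr p \<le> (infsum w UNIV) powr (p - 1) * infsum (\<lambda>i. w i * a i powr p) UNIV"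
proof -
  define K where "K = (infsum w UNIV) powr (p - 1) * infsum (\<lambda>i. w i * a i powr p) UNIV"
  have K0: "K \<ge> 0" unfolding K_def using assms(2,3) by (intro mult_nonneg_nonneg infsum_nonneg) (auto intro!: mult_nonneg_nonneg intro: less_imp_le)
  have "sum (\<lambda>i. w i * a i) F \<le> K powr (1/p)" if "finite F" for F
  proof -
    have "(\<Sum>i\<in>F. w i * a i) powr p \<le> (\<Sum>i\<in>F. w i) powr (p - 1) * (\<Sum>i\<in>F. w i * a i powr p)"
      by (rule finite_jensen[OF that assms(2,3,4)])
    also have "\<dots> \<le> K" unfolding K_def
      apply (rule mult_mono)
         apply (rule powr_mono2)
      using assms(4) apply simp
      using assms(2) apply (simp add: sum_nonneg less_imp_le)
        apply (rule finite_sum_le_infsum[OF assms(1) that]) using assms(2) apply (auto intro!: mult_nonneg_nonneg intro: less_imp_le)[2]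
       apply (rule finite_sum_le_infsum[OF s2 that]) using assms(2,3) apply (auto intro!: mult_nonneg_nonneg intro: less_imp_le)[2]
       apply simp
      using assms(2,3) by (intro sum_nonneg) (auto intro!: mult_nonneg_nonneg intro: less_imp_le)
    finally have "(\<Sum>i\<in>F. w i * a i) powr p \<le> K" .
    then have "((\<Sum>i\<in>F. w i * a i) powr p) powr (1/p) \<le> K powr (1/p)"
      using assms(4) by (intro powr_mono2) auto
    moreover have "0 \<le> (\<Sum>i\<in>F. w i * a i)" using assms(2,3) by (intro sum_nonneg) (auto intro!: mult_nonneg_nonneg intro: less_imp_le)
    ultimately show ?thesis using assms(4) by (simp add: powr_powr)
  qed
  then have "infsum (\<lambda>i. w i * a i) UNIV \<le> K powr (1/p)"
    by (intro infsum_le_finite_sums[OF s1]) auto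
  then have "(infsum (\<lambda>i. w i * a i) UNIV) powr p \<le> (K powr (1/p)) powr p"
    using assms by (intro powr_mono2) (auto intro!: infsum_nonneg mult_nonneg_nonneg intro: less_imp_le)
  also have "\<dots> = K" using K0 assms(4) by (simp add: powr_powr)
  finally show ?thesis unfolding K_def .
qed


lemma has_sum_finite_sum:
  fixes f :: "'j \<Rightarrow> 'i \<Rightarrow> real"
  assumes "finite F" "\<And>n. n \<in> F \<Longrightarrow> f n summable_on A"
  shows "((\<lambda>k. \<Sum>n\<in>F. f n k) has_sum (\<Sum>n\<in>F. infsum (f n) A)) A"
  using assms
proof (induction F rule: finite_induct)
  case empty
  then show ?case by (simp add: has_sum_0)
next
  case (insert x F)
  have "((\<lambda>k. f x k + (\<Sum>n\<in>F. f n k)) has_sum (infsum (f x) A + (\<Sum>n\<in>F. infsum (f n) A))) A"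
    by (rule has_sum_add) (use insert in auto)
  then show ?case using insert by simp
qed

lemma shift1:
  fixes f :: "int \<Rightarrow> real"
  assumes "f summable_on UNIV"
  shows "(\<lambda>k. f (n - k - 1)) summable_on UNIV" "infsum (\<lambda>k. f (n - k - 1)) UNIV = infsum f UNIV"
proof -
  have b: "bij_betw (\<lambda>k. n - k - 1) UNIV UNIV"
    by (rule bij_betw_byWitness[where f'="\<lambda>j. n - j - 1"]) auto
  show "(\<lambda>k. f (n - k - 1)) summable_on UNIV" using summable_on_reindex_bij_betw[OF b, of f] assms by blast
  show "infsum (\<lambda>k. f (n - k - 1)) UNIV = infsum f UNIV" using infsum_reindex_bij_betw[OF b, of f] by blast
qed

lemma shift2:
  fixes f :: "int \<Rightarrow> real"
  assumes "f summable_on UNIV"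
  shows "(\<lambda>n. f (n - k - 1)) summable_on UNIV" "infsum (\<lambda>n. f (n - k - 1)) UNIV = infsum f UNIV"
proof -
  have b: "bij_betw (\<lambda>n. n - k - 1) UNIV UNIV"
    by (rule bij_betw_byWitness[where f'="\<lambda>j. j + k + 1"]) auto
  show "(\<lambda>n. f (n - k - 1)) summable_on UNIV" using summable_on_reindex_bij_betw[OF b, of f] assms by blast
  show "infsum (\<lambda>n. f (n - k - 1)) UNIV = infsum f UNIV" using infsum_reindex_bij_betw[OF b, of f] by blast
qed

lemma decay_zero:
  fixes t K lam :: real
  assumes "lam > 0" "\<And>k::nat. t \<le> K * exp (- lam * real k)"
  shows "t \<le> 0"
proof -
  have "(\<lambda>k. exp (- lam) ^ k) \<longlonglongrightarrow> 0" using assms(1) by (intro LIMSEQ_power_zero) simp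
  then have "(\<lambda>k::nat. K * exp (- lam * real k)) \<longlonglongrightarrow> K * 0"
    by (intro tendsto_mult tendsto_const) (simp add: exp_of_nat_mult[symmetric] mult.commute)
  then show ?thesis using assms(2) by (intro LIMSEQ_le_const[of _ 0]) auto
qed


lemma uniq_part:
  fixes A :: "int \<Rightarrow> 'a::banach \<Rightarrow>\<^sub>L 'a" and P :: "int \<Rightarrow> 'a \<Rightarrow>\<^sub>L 'a"
  assumes inv: "\<forall>n. invertible_op (A n)"
    and Pc: "\<And>m v. P (m + 1) (A m v) = A m (P m v)"
    and Pf: "\<forall>m n. n \<le> m \<longrightarrow> norm (cocycle A m n o\<^sub>L P n) \<le> C * exp (- lam * real_of_int (m - n))"
    and Pb: "\<forall>m n. m \<le> n \<longrightarrow> norm (cocycle A m n o\<^sub>L (id_blinfun - P n)) \<le> C * exp (- lam * real_of_int (n - m))"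
    and lam: "lam > 0" and p: "1 \<le> p"
    and h1: "\<forall>n. x1 (n + 1) = A n (x1 n)" and l1: "(\<lambda>n. norm (x1 n - y n) powr p) summable_on UNIV"
    and h2: "\<forall>n. x2 (n + 1) = A n (x2 n)" and l2: "(\<lambda>n. norm (x2 n - y n) powr p) summable_on UNIV"
  shows "x1 = x2"
proof
  fix m
  obtain M1 where M1: "\<forall>n. norm (x1 n - y n) \<le> M1" using lp_bound[OF l1] p by fastforce
  obtain M2 where M2: "\<forall>n. norm (x2 n - y n) \<le> M2" using lp_bound[OF l2] p by fastforce
  define w where "w n = x1 n - x2 n" for n
  have wh: "\<forall>n. w (n + 1) = A n (w n)" using h1 h2 by (simp add: w_def blinfun.diff_right)
  have wb: "norm (w n) \<le> M1 + M2" for n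
  proof -
    have "w n = (x1 n - y n) - (x2 n - y n)" by (simp add: w_def)
    then have "norm (w n) \<le> norm (x1 n - y n) + norm (x2 n - y n)" by (metis norm_triangle_ineq4)
    then show ?thesis using M1 M2 by (smt (verit))
  qed
  define u where "u n = P n (w n)" for n
  have uh: "\<forall>n. u (n + 1) = A n (u n)" using wh Pc by (simp add: u_def)
  have "norm (u m) \<le> 0"
  proof (rule decay_zero[OF lam])
    fix k :: nat
    have "u m = cocycle A m (m - int k) (u (m - int k))" by (rule homog_cocycle[OF inv uh])
    also have "\<dots> = (cocycle A m (m - int k) o\<^sub>L P (m - int k)) (w (m - int k))" by (simp add: u_def)
    finally have "norm (u m) \<le> norm (cocycle A m (m - int k) o\<^sub>L P (m - int k)) * norm (w (m - int k))"
      by (metis norm_blinfun)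
    also have "\<dots> \<le> (C * exp (- lam * real k)) * (M1 + M2)"
      apply (rule mult_mono)
      using Pf[rule_format, of "m - int k" m] wb by (auto intro: order_trans[OF norm_ge_zero])
    finally show "norm (u m) \<le> (C * (M1 + M2)) * exp (- lam * real k)" by (simp add: algebra_simps)
  qed
  then have u0: "u m = 0" by simp
  define v where "v n = w n - P n (w n)" for n
  have vh: "\<forall>n. v (n + 1) = A n (v n)" using wh Pc by (simp add: v_def blinfun.diff_right)
  have "norm (v m) \<le> 0"
  proof (rule decay_zero[OF lam])
    fix k :: nat
    have "v m = cocycle A m (m + int k) (v (m + int k))" by (rule homog_cocycle[OF inv vh])
    also have "\<dots> = (cocycle A m (m + int k) o\<^sub>L (id_blinfun - P (m + int k))) (w (m + int k))"
      by (simp add: v_def blinfun.diff_left)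
    finally have "norm (v m) \<le> norm (cocycle A m (m + int k) o\<^sub>L (id_blinfun - P (m + int k))) * norm (w (m + int k))"
      by (metis norm_blinfun)
    also have "\<dots> \<le> (C * exp (- lam * real k)) * (M1 + M2)"
      apply (rule mult_mono)
      using Pb[rule_format, of m "m + int k"] wb by (auto intro: order_trans[OF norm_ge_zero])
    finally show "norm (v m) \<le> (C * (M1 + M2)) * exp (- lam * real k)" by (simp add: algebra_simps)
  qed
  then have v0: "v m = 0" by simp
  have "w m = u m + v m" by (simp add: u_def v_def)
  then show "x1 m = x2 m" using u0 v0 by (simp add: w_def)
qed


lemma exist_part:
  fixes A :: "int \<Rightarrow> 'a::banach \<Rightarrow>\<^sub>L 'a" and P :: "int \<Rightarrow> 'a \<Rightarrow>\<^sub>L 'a"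
  assumes inv: "\<forall>n. invertible_op (A n)"
    and Pf: "\<forall>m n. n \<le> m \<longrightarrow> norm (cocycle A m n o\<^sub>L P n) \<le> C * exp (- lam * real_of_int (m - n))"
    and Pb: "\<forall>m n. m \<le> n \<longrightarrow> norm (cocycle A m n o\<^sub>L (id_blinfun - P n)) \<le> C * exp (- lam * real_of_int (n - m))"
    and Cp: "C > 0" and lam: "lam > 0" and p: "1 \<le> p"
    and yl: "(\<lambda>n. norm (y (n + 1) - A n (y n)) powr p) summable_on UNIV"
  shows "\<exists>x. (\<forall>n. x (n + 1) = A n (x n)) \<and> (\<lambda>n. norm (x n - y n) powr p) summable_on UNIV"
proof -
  define b where "b n = y (n + 1) - A n (y n)" for n
  define a where "a n = norm (b n)" for n
  have a0: "a n \<ge> 0" for n by (simp add: a_def)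
  have al: "(\<lambda>n. a n powr p) summable_on UNIV" using yl by (simp add: a_def b_def)
  obtain Ma where Ma: "\<forall>n. a n \<le> Ma" using lp_bound[OF al a0] p by fastforce
  have Ma0: "Ma \<ge> 0" using Ma a0 order_trans by blast
  define e where "e j = exp (- lam * \<bar>real_of_int j\<bar>)" for j :: int
  have es: "e summable_on UNIV" unfolding e_def by (rule exp_abs_summable[OF lam])
  define E where "E = infsum e UNIV"
  have epos: "e j > 0" for j by (simp add: e_def)
  have e0: "e j \<ge> 0" for j by (simp add: e_def)
  have C0: "C \<ge> 0" using Cp by simp
  define G where "G n k v = (if k < n then cocycle A n (k + 1) (P (k + 1) v)
       else - cocycle A n (k + 1) (v - P (k + 1) v))" for n k :: int and v
  have Gb: "norm (G n k v) \<le> C * e (n - k - 1) * norm v" for n k v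
  proof (cases "k < n")
    case True
    have "norm (G n k v) \<le> norm (cocycle A n (k + 1) o\<^sub>L P (k + 1)) * norm v"
      using True by (simp add: G_def) (metis blinfun_apply_blinfun_compose norm_blinfun)
    also have "\<dots> \<le> C * exp (- lam * real_of_int (n - (k + 1))) * norm v"
      by (rule mult_right_mono) (use Pf[rule_format, of "k + 1" n] True in auto)
    also have "exp (- lam * real_of_int (n - (k + 1))) = e (n - k - 1)"
      using True by (simp add: e_def)
    finally show ?thesis .
  next
    case False
    have "norm (G n k v) = norm ((cocycle A n (k + 1) o\<^sub>L (id_blinfun - P (k + 1))) v)"
      using False by (simp add: G_def blinfun.diff_left)
    also have "\<dots> \<le> norm (cocycle A n (k + 1) o\<^sub>L (id_blinfun - P (k + 1))) * norm v"
      by (rule norm_blinfun)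
    also have "\<dots> \<le> C * exp (- lam * real_of_int ((k + 1) - n)) * norm v"
      by (rule mult_right_mono) (use Pb[rule_format, of n "k + 1"] False in auto)
    also have "exp (- lam * real_of_int ((k + 1) - n)) = e (n - k - 1)"
      using False by (simp add: e_def)
    finally show ?thesis .
  qed
  have coc_id: "cocycle A m m = id_blinfun" for m by (simp add: cocycle_def)
  have Grec: "G (n + 1) k v = A n (G n k v) + (if k = n then v else 0)" for n k v
  proof -
    consider "k < n" | "k = n" | "k > n" by linarith
    then show ?thesis
    proof cases
      case 1
      then show ?thesis by (simp add: G_def cocycle_step[OF inv])
    next
      case 2
      then show ?thesis by (simp add: G_def cocycle_step[OF inv] blinfun.minus_right coc_id)
    next
      case 3
      then show ?thesis by (simp add: G_def cocycle_step[OF inv] blinfun.minus_right)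
    qed
  qed
  have Gabs: "(\<lambda>k. norm (G n k (b k))) summable_on UNIV" for n
  proof -
    have s: "(\<lambda>k. C * Ma * e (n - k - 1)) summable_on UNIV"
      using summable_on_cmult_right[OF shift1(1)[OF es, of n], of "C * Ma"] by simp
    have le: "norm (G n k (b k)) \<le> C * Ma * e (n - k - 1)" for k
    proof -
      have 1: "norm (G n k (b k)) \<le> C * e (n - k - 1) * a k" using Gb[of n k "b k"] unfolding a_def .
      have 2: "C * e (n - k - 1) * a k \<le> C * e (n - k - 1) * Ma"
        by (rule mult_left_mono) (use Ma C0 e0 in auto)
      have 3: "C * e (n - k - 1) * Ma = C * Ma * e (n - k - 1)" by (simp only: mult_ac)
      from 1 2 3 show ?thesis by linarith
    qed
    show ?thesis by (rule summable_on_comparison_test[OF s le]) simp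
  qed
  have Gsum: "(\<lambda>k. G n k (b k)) summable_on UNIV" for n
    using abs_summable_summable[OF Gabs[of n]] .
  define Z where "Z n = infsum (\<lambda>k. G n k (b k)) UNIV" for n
  have Zrec: "Z (n + 1) = A n (Z n) + b n" for n
  proof -
    have h2: "((\<lambda>k. A n (G n k (b k))) has_sum A n (Z n)) UNIV"
      unfolding Z_def by (rule has_sum_bounded_linear[OF bounded_linear_blinfun_apply]) (use Gsum in auto)
    have h3: "((\<lambda>k. if k = n then b k else 0) has_sum b n) UNIV"
    proof -
      have "((\<lambda>k. if k = n then b k else 0) has_sum b n) {n}" using has_sum_finite[of "{n}" "\<lambda>k. if k = n then b k else 0"] by simp
      then show ?thesis by (rule has_sum_cong_neutral[THEN iffD1, rotated -1]) auto
    qed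
    have "((\<lambda>k. G (n + 1) k (b k)) has_sum (A n (Z n) + b n)) UNIV"
      using has_sum_add[OF h2 h3] by (simp add: Grec)
    then show ?thesis unfolding Z_def by (rule infsumI)
  qed
  define x where "x n = y n - Z n" for n
  have xh: "\<forall>n. x (n + 1) = A n (x n)"
    by (simp add: x_def Zrec b_def blinfun.diff_right)
  define T where "T n = infsum (\<lambda>k. C * e (n - k - 1) * a k powr p) UNIV" for n
  have Sa: "(\<lambda>k. a k powr p) summable_on UNIV" by (rule al)
  define SA where "SA = infsum (\<lambda>k. a k powr p) UNIV"
  have wsum: "(\<lambda>k. C * e (n - k - 1)) summable_on UNIV" for n
    by (intro summable_on_cmult_right shift1(1)[OF es])
  have winf: "infsum (\<lambda>k. C * e (n - k - 1)) UNIV = C * E" for n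
    using shift1(2)[OF es] by (simp add: infsum_cmult_right' E_def)
  have apbound: "a k powr p \<le> SA" for k unfolding SA_def by (rule term_le_infsum[OF Sa]) simp
  have SA0: "SA \<ge> 0" using apbound[of 0] by (smt (verit) powr_ge_zero)
  have Tsum_k: "(\<lambda>k. C * e (n - k - 1) * a k powr p) summable_on UNIV" for n
    by (rule summable_on_comparison_test[where f="\<lambda>k. C * e (n - k - 1) * SA"])
      (use summable_on_cmult_left[OF wsum[of n], of SA] apbound C0 e0 a0 in \<open>auto intro!: mult_left_mono mult_nonneg_nonneg\<close>)
  have Zb: "norm (Z n) powr p \<le> (C * E) powr (p - 1) * T n" for n
  proof -
    have s1: "(\<lambda>k. C * e (n - k - 1) * a k) summable_on UNIV"
      by (rule summable_on_comparison_test[where f="\<lambda>k. C * e (n - k - 1) * Ma"])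
        (use summable_on_cmult_left[OF wsum[of n], of Ma] Ma C0 e0 a0 in \<open>auto intro!: mult_left_mono mult_nonneg_nonneg\<close>)
    have abss: "(\<lambda>k. G n k (b k)) abs_summable_on UNIV"
      by (rule summable_on_comparison_test[OF s1]) (use Gb in \<open>auto simp: a_def\<close>)
    have "norm (Z n) \<le> infsum (\<lambda>k. norm (G n k (b k))) UNIV"
      unfolding Z_def by (rule norm_infsum_bound[OF abss])
    also have "\<dots> \<le> infsum (\<lambda>k. C * e (n - k - 1) * a k) UNIV"
      by (rule infsum_mono[OF abss s1]) (use Gb in \<open>auto simp: a_def\<close>)
    finally have "norm (Z n) powr p \<le> (infsum (\<lambda>k. C * e (n - k - 1) * a k) UNIV) powr p"
      using p by (intro powr_mono2) auto
    also have "\<dots> \<le> (infsum (\<lambda>k. C * e (n - k - 1)) UNIV) powr (p - 1) * infsum (\<lambda>k. C * e (n - k - 1) * a k powr p) UNIV"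
      by (rule inf_jensen[OF wsum _ a0 p s1 Tsum_k]) (use Cp epos in simp)
    finally show ?thesis by (simp add: winf T_def)
  qed
  have T0: "T n \<ge> 0" for n unfolding T_def using C0 e0 a0
    by (intro infsum_nonneg mult_nonneg_nonneg) auto
  have Tsum: "T summable_on UNIV"
  proof (rule nonneg_bdd_above_summable_on)
    show "bdd_above (sum T ` {F. F \<subseteq> UNIV \<and> finite F})"
    proof (rule bdd_aboveI2)
      fix F :: "int set" assume "F \<in> {F. F \<subseteq> UNIV \<and> finite F}"
      then have F: "finite F" by simp
      have "sum T F = infsum (\<lambda>k. \<Sum>n\<in>F. C * e (n - k - 1) * a k powr p) UNIV"
        unfolding T_def by (rule infsumI[symmetric], rule has_sum_finite_sum[OF F]) (use Tsum_k in auto)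
      also have "\<dots> \<le> infsum (\<lambda>k. C * E * a k powr p) UNIV"
      proof (rule infsum_mono)
        show s: "(\<lambda>k. C * E * a k powr p) summable_on UNIV" by (intro summable_on_cmult_right Sa)
        have le: "(\<Sum>n\<in>F. C * e (n - k - 1) * a k powr p) \<le> C * E * a k powr p" for k
        proof -
          have "(\<Sum>n\<in>F. e (n - k - 1)) \<le> infsum (\<lambda>n. e (n - k - 1)) UNIV"
            by (rule finite_sum_le_infsum[OF shift2(1)[OF es] F]) (use e0 in auto)
          also have "\<dots> = E" using shift2(2)[OF es] by (simp add: E_def)
          finally have "(\<Sum>n\<in>F. e (n - k - 1)) * (C * a k powr p) \<le> E * (C * a k powr p)"
            using Cp by (intro mult_right_mono) auto
          moreover have "(\<Sum>n\<in>F. C * e (n - k - 1) * a k powr p) = (\<Sum>n\<in>F. e (n - k - 1)) * (C * a k powr p)"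
            by (simp add: sum_distrib_right sum_distrib_left mult_ac)
          ultimately show ?thesis by (simp add: mult_ac)
        qed
        show "(\<lambda>k. \<Sum>n\<in>F. C * e (n - k - 1) * a k powr p) summable_on UNIV"
          by (rule summable_on_comparison_test[OF s le])
            (use C0 e0 in \<open>auto intro!: sum_nonneg mult_nonneg_nonneg\<close>)
        show "\<And>k. k \<in> UNIV \<Longrightarrow> (\<Sum>n\<in>F. C * e (n - k - 1) * a k powr p) \<le> C * E * a k powr p"
          using le by simp
      qed
      finally show "sum T F \<le> infsum (\<lambda>k. C * E * a k powr p) UNIV" .
    qed
  qed (use T0 in auto)
  have "(\<lambda>n. norm (x n - y n) powr p) summable_on UNIV"
  proof (rule summable_on_comparison_test)
    show "(\<lambda>n. (C * E) powr (p - 1) * T n) summable_on UNIV" by (intro summable_on_cmult_right Tsum)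
    fix n
    have "norm (x n - y n) = norm (Z n)" by (simp add: x_def)
    then show "norm (x n - y n) powr p \<le> (C * E) powr (p - 1) * T n" using Zb by simp
  qed auto
  then show ?thesis using xh by blast
qed

theorem corollary3p9:
  fixes A :: "int \<Rightarrow> 'a::banach \<Rightarrow>\<^sub>L 'a" and p :: real and y :: "int \<Rightarrow> 'a"
  assumes "\<forall>n. invertible_op (A n)"
    and "bdd_above (range (\<lambda>n. norm (A n)))"
    and "exp_dichotomy A"
    and "1 \<le> p"
    and "(\<lambda>n. norm (y (n + 1) - A n (y n)) powr p) summable_on UNIV"
  shows "\<exists>!x :: int \<Rightarrow> 'a. (\<forall>n. x (n + 1) = A n (x n)) \<and>
           (\<lambda>n. norm (x n - y n) powr p) summable_on UNIV"
proof -
  obtain P :: "int \<Rightarrow> 'a \<Rightarrow>\<^sub>L 'a" and C lam :: real where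
    Cp: "C > 0" and lamp: "lam > 0"
    and Pcomm: "\<forall>m. P (m + 1) o\<^sub>L A m = A m o\<^sub>L P m"
    and Pf: "\<forall>m n. n \<le> m \<longrightarrow> norm (cocycle A m n o\<^sub>L P n) \<le> C * exp (- lam * real_of_int (m - n))"
    and Pb: "\<forall>m n. m \<le> n \<longrightarrow> norm (cocycle A m n o\<^sub>L (id_blinfun - P n)) \<le> C * exp (- lam * real_of_int (n - m))"
    using assms(3) unfolding exp_dichotomy_def by blast
  have Pc: "\<And>m v. P (m + 1) (A m v) = A m (P m v)"
    using Pcomm by (metis blinfun_apply_blinfun_compose)
  obtain x where x: "(\<forall>n. x (n + 1) = A n (x n)) \<and> (\<lambda>n. norm (x n - y n) powr p) summable_on UNIV"
    using exist_part[OF assms(1) Pf Pb Cp lamp assms(4) assms(5)] by blast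
  show ?thesis
  proof (rule ex1I[of _ x])
    show "(\<forall>n. x (n + 1) = A n (x n)) \<and> (\<lambda>n. norm (x n - y n) powr p) summable_on UNIV" by (rule x)
    fix x2 assume x2: "(\<forall>n. x2 (n + 1) = A n (x2 n)) \<and> (\<lambda>n. norm (x2 n - y n) powr p) summable_on UNIV"
    show "x2 = x"
      using uniq_part[OF assms(1) Pc Pf Pb lamp assms(4)] x x2 by blast
  qed
qed

end
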